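(* Let $(a,D)$ be a weak hyperoperator on $\mathbb{R}$ in the complex Banach space $X$, and assume that for each $z\in\mathbb{C}\setminus\mathbb{R}$ the closure of $r_z(a)$ is a bounded operator on $X$, where $r_z(\xi)=1/(z-\xi)$. Then the closure $\bar a$ of $a$ has real spectrum in the usual sense, i.e. every $z\in\mathbb{C}\setminus\mathbb{R}$ belongs to the resolvent set of $\bar a$.
   Context: $X$ is a complex Banach space. $\mathcal{E}(\mathbb{R})=C^\infty(\mathbb{R})$ (complex-valued) with the topology of uniform convergence of all derivatives on compacts; $r_z\in\mathcal{E}(\mathbb{R})$ for $z\notin\mathbb{R}$. For a dense subspace $D\subset X$, $\mathbf{L}(D)$ is the set of closable linear operators $D\to D$. A weak hyperoperator $(a,D)$ on $\mathbb{R}$ is a linear operator $a:D\to D$, $D$ dense, $a$ closable, together with a linear multiplicative map $\mathcal{E}(\mathbb{R})\to\mathbf{L}(D)$, $h\mapsto h(a)$, sending each polynomial $p$ to $p(a)$, such that $h_k(a)x\to h(a)x$ for all $x\in D$ whenever $h_k\to h$ in $\mathcal{E}(\mathbb{R})$. *)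

theory Defs
  imports "HOL-Analysis.Analysis" "HOL-Computational_Algebra.Polynomial"
begin

text \<open>A complex Banach space
  is modelled as a real Banach space 'x together with a complex scalar multiplication
  sc extending the real one and satisfying the vector-space and norm axioms.\<close>

definition cbanach :: "(complex \<Rightarrow> 'x::banach \<Rightarrow> 'x) \<Rightarrow> bool" where
  "cbanach sc \<longleftrightarrow>
     (\<forall>r x. sc (complex_of_real r) x = r *\<^sub>R x) \<and>
     (\<forall>c d x. sc (c * d) x = sc c (sc d x)) \<and>
     (\<forall>c d x. sc (c + d) x = sc c x + sc d x) \<and>
     (\<forall>c x y. sc c (x + y) = sc c x + sc c y) \<and>
     (\<forall>c x. norm (sc c x) = cmod c * norm x)"

definition csubspace :: "(complex \<Rightarrow> 'x::banach \<Rightarrow> 'x) \<Rightarrow> 'x set \<Rightarrow> bool" where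
  "csubspace sc D \<longleftrightarrow> 0 \<in> D \<and> (\<forall>x\<in>D. \<forall>y\<in>D. x + y \<in> D) \<and> (\<forall>c. \<forall>x\<in>D. sc c x \<in> D)"

definition graph :: "'x set \<Rightarrow> ('x \<Rightarrow> 'x) \<Rightarrow> ('x \<times> 'x) set" where
  "graph D a = {(x, a x) | x. x \<in> D}"

definition op_closure :: "'x::banach set \<Rightarrow> ('x \<Rightarrow> 'x) \<Rightarrow> ('x \<times> 'x) set" where
  "op_closure D a = closure (graph D a)"

definition closable :: "'x::banach set \<Rightarrow> ('x \<Rightarrow> 'x) \<Rightarrow> bool" where
  "closable D a \<longleftrightarrow> (\<forall>y. (0, y) \<in> op_closure D a \<longrightarrow> y = 0)"

definition clinear_on :: "(complex \<Rightarrow> 'x::banach \<Rightarrow> 'x) \<Rightarrow> 'x set \<Rightarrow> ('x \<Rightarrow> 'x) \<Rightarrow> bool" where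
  "clinear_on sc D a \<longleftrightarrow> (\<forall>x\<in>D. a x \<in> D) \<and>
     (\<forall>x\<in>D. \<forall>y\<in>D. a (x + y) = a x + a y) \<and> (\<forall>c. \<forall>x\<in>D. a (sc c x) = sc c (a x))"

definition in_LD :: "(complex \<Rightarrow> 'x::banach \<Rightarrow> 'x) \<Rightarrow> 'x set \<Rightarrow> ('x \<Rightarrow> 'x) \<Rightarrow> bool" where
  "in_LD sc D a \<longleftrightarrow> clinear_on sc D a \<and> closable D a"

primrec hder :: "nat \<Rightarrow> (real \<Rightarrow> complex) \<Rightarrow> real \<Rightarrow> complex" where
  "hder 0 h = h"
| "hder (Suc n) h = (\<lambda>t. vector_derivative (hder n h) (at t))"

definition smooth :: "(real \<Rightarrow> complex) \<Rightarrow> bool" where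
  "smooth h \<longleftrightarrow> (\<forall>n t. hder n h differentiable (at t))"

text \<open>Convergence in E(R): uniform convergence of all derivatives on compacts
  (every compact subset of R lies in some interval [-M, M]).\<close>
definition convE :: "(nat \<Rightarrow> real \<Rightarrow> complex) \<Rightarrow> (real \<Rightarrow> complex) \<Rightarrow> bool" where
  "convE hs h \<longleftrightarrow> (\<forall>n M. uniform_limit {-M..M} (\<lambda>k. hder n (hs k)) (hder n h) sequentially)"

definition poly_op :: "(complex \<Rightarrow> 'x::banach \<Rightarrow> 'x) \<Rightarrow> complex poly \<Rightarrow> ('x \<Rightarrow> 'x) \<Rightarrow> 'x \<Rightarrow> 'x" where
  "poly_op sc p a x = (\<Sum>i\<le>degree p. sc (coeff p i) ((a ^^ i) x))"

definition weak_hyperop ::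
  "(complex \<Rightarrow> 'x::banach \<Rightarrow> 'x) \<Rightarrow> 'x set \<Rightarrow> ('x \<Rightarrow> 'x) \<Rightarrow> ((real \<Rightarrow> complex) \<Rightarrow> 'x \<Rightarrow> 'x) \<Rightarrow> bool" where
  "weak_hyperop sc D a F \<longleftrightarrow>
     csubspace sc D \<and> closure D = UNIV \<and> in_LD sc D a \<and>
     (\<forall>h. smooth h \<longrightarrow> in_LD sc D (F h)) \<and>
     (\<forall>h g. smooth h \<longrightarrow> smooth g \<longrightarrow> (\<forall>x\<in>D. F (\<lambda>t. h t + g t) x = F h x + F g x)) \<and>
     (\<forall>h c. smooth h \<longrightarrow> (\<forall>x\<in>D. F (\<lambda>t. c * h t) x = sc c (F h x))) \<and>
     (\<forall>h g. smooth h \<longrightarrow> smooth g \<longrightarrow> (\<forall>x\<in>D. F (\<lambda>t. h t * g t) x = F h (F g x))) \<and>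
     (\<forall>p. \<forall>x\<in>D. F (\<lambda>t. poly p (complex_of_real t)) x = poly_op sc p a x) \<and>
     (\<forall>hs h. (\<forall>k. smooth (hs k)) \<longrightarrow> smooth h \<longrightarrow> convE hs h \<longrightarrow>
        (\<forall>x\<in>D. (\<lambda>k. F (hs k) x) \<longlonglongrightarrow> F h x))"

definition rz :: "complex \<Rightarrow> real \<Rightarrow> complex" where
  "rz z = (\<lambda>t. 1 / (z - complex_of_real t))"

text \<open>z lies in the resolvent set of the (closed) operator with graph G:
  z - T : dom T \<rightarrow> X is bijective with bounded inverse R.\<close>
definition in_resolvent :: "(complex \<Rightarrow> 'x::banach \<Rightarrow> 'x) \<Rightarrow> ('x \<times> 'x) set \<Rightarrow> complex \<Rightarrow> bool" where
  "in_resolvent sc G z \<longleftrightarrow> (\<exists>R. bounded_linear R \<and>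
      (\<forall>w. (R w, sc z (R w) - w) \<in> G) \<and>
      (\<forall>x y. (x, y) \<in> G \<longrightarrow> R (sc z x - y) = x))"

end

theory Submission
  imports Defs
begin

lemma alg_aux:
  fixes u c :: complex assumes "u \<noteq> 0"
  shows "- (c * (of_nat k * u ^ (k - 1) * (- 1))) / (u ^ k * u ^ k) = c * of_nat k / u ^ Suc k"
proof (cases k)
  case (Suc m)
  have "u ^ k * u ^ k = u ^ Suc k * u ^ m" using Suc by (simp add: power_add[symmetric])
  then show ?thesis using Suc assms by (simp add: field_simps)
qed simp

lemma rz_deriv:
  assumes "Im z \<noteq> 0"
  shows "((\<lambda>t. c / (z - complex_of_real t) ^ k) has_vector_derivative
          (c * of_nat k / (z - complex_of_real t) ^ Suc k)) (at t)"
proof -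
  have nz: "z - complex_of_real t \<noteq> 0" using assms by (metis Im_complex_of_real right_minus_eq)
  have "((\<lambda>w. c / (z - w) ^ k) has_field_derivative (c * of_nat k / (z - complex_of_real t) ^ Suc k)) (at (complex_of_real t))"
  proof -
    have "((\<lambda>w. c / (z - w) ^ k) has_field_derivative
      - (c * (of_nat k * (z - complex_of_real t) ^ (k - 1) * (- 1))) / ((z - complex_of_real t) ^ k * (z - complex_of_real t) ^ k)) (at (complex_of_real t))"
      using nz by (auto intro!: derivative_eq_intros)
    moreover have "- (c * (of_nat k * (z - complex_of_real t) ^ (k - 1) * (- 1))) / ((z - complex_of_real t) ^ k * (z - complex_of_real t) ^ k)
       = c * of_nat k / (z - complex_of_real t) ^ Suc k"
      using nz by (rule alg_aux)
    ultimately show ?thesis by simp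
  qed
  then show ?thesis by (rule has_vector_derivative_real_field)
qed

lemma hder_rz:
  assumes "Im z \<noteq> 0"
  shows "hder n (rz z) = (\<lambda>t. fact n / (z - complex_of_real t) ^ Suc n)"
proof (induction n)
  case 0
  then show ?case by (simp add: rz_def fun_eq_iff)
next
  case (Suc n)
  show ?case
    apply (simp only: hder.simps Suc)
    apply (rule ext)
    apply (rule vector_derivative_at)
    using rz_deriv[OF assms, of "fact n" "Suc n"] by (simp add: algebra_simps)
qed

lemma smooth_rz: assumes "Im z \<noteq> 0" shows "smooth (rz z)"
  unfolding smooth_def hder_rz[OF assms]
  using rz_deriv[OF assms] differentiableI_vector by blast

lemma hder_lin: "hder (Suc n) (\<lambda>t. z - complex_of_real t) = (\<lambda>t. if n = 0 then -1 else 0)"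
proof (induction n)
  case 0
  have "(\<lambda>t. vector_derivative (\<lambda>t. z - complex_of_real t) (at t)) = (\<lambda>t. -1)"
    apply (rule ext, rule vector_derivative_at)
    by (auto intro!: derivative_eq_intros has_vector_derivative_real_field)
  then show ?case by simp
next
  case (Suc n)
  have e: "hder (Suc (Suc n)) (\<lambda>t. z - complex_of_real t) = (\<lambda>t. vector_derivative (hder (Suc n) (\<lambda>t. z - complex_of_real t)) (at t))"
    by (rule hder.simps(2))
  show ?case unfolding e Suc.IH apply (rule ext, rule vector_derivative_at)
    by (auto intro!: derivative_eq_intros)
qed

lemma smooth_lin: "smooth (\<lambda>t. z - complex_of_real t)"
  unfolding smooth_def
proof (intro allI)
  fix n t
  show "hder n (\<lambda>t. z - complex_of_real t) differentiable at t"
  proof (cases n)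
    case 0
    then show ?thesis
      by (auto intro!: differentiableI_vector derivative_eq_intros has_vector_derivative_real_field)
  next
    case (Suc m)
    then show ?thesis unfolding Suc hder_lin by (auto intro!: differentiableI_vector derivative_eq_intros)
  qed
qed


lemma grp_aux: fixes s b w :: "'a::ab_group_add" shows "s - b = w \<Longrightarrow> b = s - w" by auto

lemma cb_facts:
  assumes "cbanach sc"
  shows "sc 1 x = x" "sc (-1) x = - x" "bounded_linear (sc c)"
    "sc c (x - y) = sc c x - sc c y"
proof -
  note cb = assms[unfolded cbanach_def]
  have r: "\<And>r x. sc (complex_of_real r) x = r *\<^sub>R x" using cb by blast
  have mu: "\<And>c d x. sc (c * d) x = sc c (sc d x)" using cb by blast
  show one: "sc 1 x = x" using r[of 1 x] by simp
  show m1: "\<And>x. sc (-1) x = - x" proof -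
    fix x show "sc (-1) x = - x" using r[of "-1" x] by simp
  qed
  have add: "\<And>x y. sc c (x + y) = sc c x + sc c y" using cb by blast
  have neg: "sc c (- x) = - sc c x" for x
  proof -
    have "sc c (- x) = sc c (sc (-1) x)" by (simp add: m1)
    also have "\<dots> = sc (-1) (sc c x)" by (simp add: mu[symmetric] mult.commute)
    finally show ?thesis by (simp add: m1)
  qed
  show "sc c (x - y) = sc c x - sc c y" by (simp only: diff_conv_add_uminus add neg)
  show "bounded_linear (sc c)"
  proof (rule bounded_linear_intro[where K="cmod c"])
    show "sc c (x + y) = sc c x + sc c y" for x y by (rule add)
    show "sc c (r *\<^sub>R x) = r *\<^sub>R sc c x" for r x
    proof -
      have "sc c (r *\<^sub>R x) = sc c (sc (of_real r) x)" using cb by simp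
      also have "\<dots> = sc (of_real r * c) x" using cb by (simp add: mult.commute)
      also have "\<dots> = r *\<^sub>R sc c x" using cb by metis
      finally show ?thesis .
    qed
    show "norm (sc c x) \<le> norm x * cmod c" for x using cb by (simp add: mult.commute)
  qed
qed

theorem proposition5p7:
  fixes sc :: "complex \<Rightarrow> 'x::banach \<Rightarrow> 'x"
    and D :: "'x set" and a :: "'x \<Rightarrow> 'x"
    and F :: "(real \<Rightarrow> complex) \<Rightarrow> 'x \<Rightarrow> 'x"
  assumes "cbanach sc"
    and "weak_hyperop sc D a F"
    and "\<forall>z. Im z \<noteq> 0 \<longrightarrow>
           (\<exists>B. bounded_linear B \<and> op_closure D (F (rz z)) = {(x, B x) | x. True})"
  shows "\<forall>z. Im z \<noteq> 0 \<longrightarrow> in_resolvent sc (op_closure D a) z"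
proof (intro allI impI)
  fix z :: complex assume z: "Im z \<noteq> 0"
  obtain B where B: "bounded_linear B" and GB: "op_closure D (F (rz z)) = {(x, B x) | x. True}"
    using assms(3) z by blast
  note cb = cb_facts[OF assms(1)]
  note H = assms(2)[unfolded weak_hyperop_def]
  have sub: "csubspace sc D" and dense: "closure D = UNIV" and aLD: "in_LD sc D a"
    using H by auto
  have FLD: "\<And>h. smooth h \<Longrightarrow> in_LD sc D (F h)" using H by blast
  have Fmul: "\<And>h g x. smooth h \<Longrightarrow> smooth g \<Longrightarrow> x \<in> D \<Longrightarrow> F (\<lambda>t. h t * g t) x = F h (F g x)"
    using H by blast
  have Fpoly: "\<And>p x. x \<in> D \<Longrightarrow> F (\<lambda>t. poly p (complex_of_real t)) x = poly_op sc p a x"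
    using H by blast
  have aD: "\<And>x. x \<in> D \<Longrightarrow> a x \<in> D" using aLD unfolding in_LD_def clinear_on_def by blast
  have scD: "\<And>c x. x \<in> D \<Longrightarrow> sc c x \<in> D" using sub unfolding csubspace_def by blast
  have addD: "\<And>x y. x \<in> D \<Longrightarrow> y \<in> D \<Longrightarrow> x + y \<in> D" using sub unfolding csubspace_def by blast
  have diffD: "\<And>x y. x \<in> D \<Longrightarrow> y \<in> D \<Longrightarrow> x - y \<in> D"
    using addD scD cb(2) by (metis diff_conv_add_uminus)
  have srz: "smooth (rz z)" by (rule smooth_rz[OF z])
  have slin: "smooth (\<lambda>t. z - complex_of_real t)" by (rule smooth_lin)
  have rzD: "\<And>x. x \<in> D \<Longrightarrow> F (rz z) x \<in> D"
    using FLD[OF srz] unfolding in_LD_def clinear_on_def by blast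
  have FB: "\<And>x. x \<in> D \<Longrightarrow> F (rz z) x = B x"
  proof -
    fix x assume "x \<in> D"
    then have "(x, F (rz z) x) \<in> graph D (F (rz z))" unfolding graph_def by blast
    then have "(x, F (rz z) x) \<in> op_closure D (F (rz z))"
      unfolding op_closure_def using closure_subset by blast
    then show "F (rz z) x = B x" unfolding GB by blast
  qed
  have Fone: "\<And>x. x \<in> D \<Longrightarrow> F (\<lambda>t. 1) x = x"
  proof -
    fix x assume "x \<in> D"
    from Fpoly[OF this, of "[:1:]"] show "F (\<lambda>t. 1) x = x"
      by (simp add: poly_op_def cb(1))
  qed
  have Flin: "\<And>x. x \<in> D \<Longrightarrow> F (\<lambda>t. z - complex_of_real t) x = sc z x - a x"
  proof -
    fix x assume "x \<in> D"
    have "(\<lambda>t. poly [:z, -1:] (complex_of_real t)) = (\<lambda>t. z - complex_of_real t)" by auto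
    moreover have "poly_op sc [:z, -1:] a x = sc z x - a x"
      by (simp add: poly_op_def cb(2))
    ultimately show "F (\<lambda>t. z - complex_of_real t) x = sc z x - a x"
      using Fpoly[OF \<open>x \<in> D\<close>, of "[:z, -1:]"] by simp
  qed
  have nz: "\<And>t. z - complex_of_real t \<noteq> 0" using z by (metis Im_complex_of_real right_minus_eq)
  have e1: "(\<lambda>t. rz z t * (z - complex_of_real t)) = (\<lambda>t. 1)" using nz by (simp add: rz_def fun_eq_iff)
  have e2: "(\<lambda>t. (z - complex_of_real t) * rz z t) = (\<lambda>t. 1)" using nz by (simp add: rz_def fun_eq_iff)
  have id1: "\<And>x. x \<in> D \<Longrightarrow> B (sc z x - a x) = x"
  proof -
    fix x assume x: "x \<in> D"
    have "x = F (\<lambda>t. rz z t * (z - complex_of_real t)) x" using Fone[OF x] e1 by simp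
    also have "\<dots> = F (rz z) (sc z x - a x)" using Fmul[OF srz slin x] Flin[OF x] by simp
    also have "\<dots> = B (sc z x - a x)" using FB diffD scD aD x by blast
    finally show "B (sc z x - a x) = x" by simp
  qed
  have id2: "\<And>x. x \<in> D \<Longrightarrow> sc z (B x) - a (B x) = x"
  proof -
    fix x assume x: "x \<in> D"
    have "x = F (\<lambda>t. (z - complex_of_real t) * rz z t) x" using Fone[OF x] e2 by simp
    also have "\<dots> = F (\<lambda>t. z - complex_of_real t) (F (rz z) x)" using Fmul[OF slin srz x] by simp
    also have "\<dots> = sc z (B x) - a (B x)" using Flin[OF rzD[OF x]] FB[OF x] by simp
    finally show "sc z (B x) - a (B x) = x" by simp
  qed
  have BxD: "\<And>x. x \<in> D \<Longrightarrow> B x \<in> D" using rzD FB by metis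
  have scl: "bounded_linear (sc z)" by (rule cb(3))
  show "in_resolvent sc (op_closure D a) z"
    unfolding in_resolvent_def
  proof (intro exI conjI allI impI)
    show "bounded_linear B" by (rule B)
    fix w
    have "w \<in> closure D" using dense by simp
    then obtain ws where ws: "\<And>n. ws n \<in> D" "ws \<longlonglongrightarrow> w" unfolding closure_sequential by blast
    have t1: "(\<lambda>n. B (ws n)) \<longlonglongrightarrow> B w" using bounded_linear.tendsto[OF B ws(2)] .
    have t2: "(\<lambda>n. sc z (B (ws n)) - ws n) \<longlonglongrightarrow> sc z (B w) - w"
      by (intro tendsto_diff bounded_linear.tendsto[OF scl] t1 ws(2))
    have L1: "(\<lambda>n. (B (ws n), a (B (ws n)))) \<longlonglongrightarrow> (B w, sc z (B w) - w)"
    proof -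
      have "(\<lambda>n. a (B (ws n))) = (\<lambda>n. sc z (B (ws n)) - ws n)"
      proof (rule ext)
        fix n
        have h: "sc z (B (ws n)) - a (B (ws n)) = ws n" using id2 ws(1) by blast
        show "a (B (ws n)) = sc z (B (ws n)) - ws n" using h by (rule grp_aux)
      qed
      then show ?thesis using tendsto_Pair[OF t1 t2] by metis
    qed
    have L2: "\<forall>n. (B (ws n), a (B (ws n))) \<in> graph D a"
      unfolding graph_def using BxD ws(1) by blast
    show "(B w, sc z (B w) - w) \<in> op_closure D a"
      unfolding op_closure_def closure_sequential
      by (rule exI[where x="\<lambda>n. (B (ws n), a (B (ws n)))"], rule conjI[OF L2 L1])
  next
    fix x y assume "(x, y) \<in> op_closure D a"
    then obtain p where p: "\<And>n. p n \<in> graph D a" "p \<longlonglongrightarrow> (x, y)"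
      unfolding op_closure_def closure_sequential by blast
    have pD: "fst (p n) \<in> D \<and> snd (p n) = a (fst (p n))" for n
    proof -
      obtain x0 where "p n = (x0, a x0)" "x0 \<in> D" using p(1)[of n] unfolding graph_def by blast
      then show ?thesis by simp
    qed
    have pa: "snd (p n) = a (fst (p n))" for n using pD[of n] by (rule conjunct2)
    have pD: "fst (p n) \<in> D" for n using pD[of n] by (rule conjunct1)
    have tx: "(\<lambda>n. fst (p n)) \<longlonglongrightarrow> x" using tendsto_fst[OF p(2)] by simp
    have ty: "(\<lambda>n. snd (p n)) \<longlonglongrightarrow> y" using tendsto_snd[OF p(2)] by simp
    have T1: "(\<lambda>n. B (sc z (fst (p n)) - snd (p n))) \<longlonglongrightarrow> B (sc z x - y)"
      by (intro bounded_linear.tendsto[OF B] tendsto_diff bounded_linear.tendsto[OF scl] tx ty)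
    have T2: "(\<lambda>n. B (sc z (fst (p n)) - snd (p n))) = (\<lambda>n. fst (p n))"
      using id1 pD pa by auto
    have T3: "(\<lambda>n. fst (p n)) \<longlonglongrightarrow> B (sc z x - y)" using T1 unfolding T2 .
    show "B (sc z x - y) = x" using LIMSEQ_unique[OF T3 tx] .
  qed
qed

end
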